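(* Let $f$ be a probability density on $\mathbb{R}$ and let $\mathcal{C}$ be the class of log-concave probability densities on $\mathbb{R}$. Define $$\pi_0:=\sup\big\{\pi:\exists g\in\mathcal{C}\text{ such that } f-\pi g\ge0\text{ a.e.}\big\}.$$ Then $\pi_0$ equals the value of the optimization problem $$\text{maximize } \int_{-\infty}^{\infty}h(x)\,dx\quad\text{over}\quad\{h:\mathbb{R}\to\mathbb{R}_+ \text{ log-concave},\ h\le f \text{ a.e.}\},$$ and this problem admits a maximizer. Furthermore, the maximizer need not be unique: there exist densities $f$ (e.g. $f=\frac1m(f_1+\cdots+f_m)$ with $m\ge2$ and $f_1,\dots,f_m$ log-concave densities with pairwise disjoint supports) for which the problem has more than one maximizer.
   Context: A function $h:\mathbb{R}\to[0,\infty)$ is log-concave if $\log h:\mathbb{R}\to[-\infty,\infty)$ is concave (with $\log 0=-\infty$); in particular $h\equiv0$ is log-concave. Functions are identified when they agree almost everywhere. *)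

theory Defs
  imports "HOL-Analysis.Analysis"
begin

definition lnE :: "real \<Rightarrow> ereal" where
  "lnE a = (if a = 0 then -\<infinity> else ereal (ln a))"

definition log_concave :: "(real \<Rightarrow> real) \<Rightarrow> bool" where
  "log_concave h \<longleftrightarrow> (\<forall>x. 0 \<le> h x) \<and>
     (\<forall>x y t. 0 < t \<and> t < 1 \<longrightarrow>
        ereal t * lnE (h x) + ereal (1 - t) * lnE (h y) \<le> lnE (h (t * x + (1 - t) * y)))"

definition prob_density :: "(real \<Rightarrow> real) \<Rightarrow> bool" where
  "prob_density f \<longleftrightarrow> f \<in> borel_measurable lborel \<and> (\<forall>x. 0 \<le> f x) \<and>
     integrable lborel f \<and> (\<integral>x. f x \<partial>lborel) = 1"

definition logconcave_densities :: "(real \<Rightarrow> real) set" where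
  "logconcave_densities = {g. prob_density g \<and> log_concave g}"

definition pi0 :: "(real \<Rightarrow> real) \<Rightarrow> real" where
  "pi0 f = Sup {p. \<exists>g\<in>logconcave_densities. AE x in lborel. f x - p * g x \<ge> 0}"

definition feasible :: "(real \<Rightarrow> real) \<Rightarrow> (real \<Rightarrow> real) \<Rightarrow> bool" where
  "feasible f h \<longleftrightarrow> log_concave h \<and> (AE x in lborel. h x \<le> f x)"

definition opt_value :: "(real \<Rightarrow> real) \<Rightarrow> real" where
  "opt_value f = Sup {(\<integral>x. h x \<partial>lborel) | h. feasible f h}"

definition is_maximizer :: "(real \<Rightarrow> real) \<Rightarrow> (real \<Rightarrow> real) \<Rightarrow> bool" where
  "is_maximizer f h \<longleftrightarrow> feasible f h \<and>
     (\<forall>h'. feasible f h' \<longrightarrow> (\<integral>x. h' x \<partial>lborel) \<le> (\<integral>x. h x \<partial>lborel))"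

end

theory Submission
  imports Defs "HOL-Library.Diagonal_Subsequence"
begin


lemma minus_one_less: "x - 1 < (x::real)"
  by simp

lemma countable_conv:
  fixes f :: "nat \<Rightarrow> real \<Rightarrow> real"
  assumes S: "countable S" and bdd: "\<And>n x. \<bar>f n x\<bar> \<le> M"
  shows "\<exists>s. strict_mono s \<and> (\<forall>x\<in>S. convergent (\<lambda>n. f (s n) x))"
proof (cases "S = {}")
  case True
  then show ?thesis by (auto intro: strict_mono_id)
next
  case False
  define r where "r = from_nat_into S"
  have rS: "range r = S" using False S unfolding r_def by simp
  let ?P = "\<lambda>n. \<lambda>s. convergent (\<lambda>k. f (s k) (r n))"
  interpret nat: subseqs ?P
  proof (unfold convergent_def, unfold subseqs_def, auto)
    fix n :: nat and s :: "nat \<Rightarrow> nat" assume s: "strict_mono s"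
    have "bounded {-M..M}"
      using bounded_closed_interval by auto
    moreover have "\<And>k. f (s k) (r n) \<in> {-M..M}"
      using bdd by (simp add: abs_le_iff minus_le_iff)
    ultimately have "\<exists>l s'. strict_mono s' \<and> ((\<lambda>k. f (s k) (r n)) \<circ> s') \<longlonglongrightarrow> l"
      using compact_Icc compact_imp_seq_compact seq_compactE by metis
    thus "\<exists>s'. strict_mono (s'::nat\<Rightarrow>nat) \<and> (\<exists>l. (\<lambda>k. f (s (s' k)) (r n)) \<longlonglongrightarrow> l)"
      by (auto simp: comp_def)
  qed
  define d where "d = nat.diagseq"
  have subseq: "strict_mono d"
    unfolding d_def using nat.subseq_diagseq by auto
  have rat_cnv: "?P n d" for n
  proof -
    have Pn_seqseq: "?P n (nat.seqseq (Suc n))"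
      by (rule nat.seqseq_holds)
    have 1: "(\<lambda>k. f ((nat.seqseq (Suc n) \<circ> (\<lambda>k. nat.fold_reduce (Suc n) k
      (Suc n + k))) k) (r n)) = (\<lambda>k. f (nat.seqseq (Suc n) k) (r n)) \<circ>
      (\<lambda>k. nat.fold_reduce (Suc n) k (Suc n + k))"
      by auto
    have 2: "?P n (d \<circ> ((+) (Suc n)))"
      unfolding d_def nat.diagseq_seqseq 1
      by (intro convergent_subseq_convergent Pn_seqseq nat.subseq_diagonal_rest)
    then obtain L where 3: "(\<lambda>na. f (d (na + Suc n)) (r n)) \<longlonglongrightarrow> L"
      by (auto simp: add.commute dest: convergentD)
    then have "(\<lambda>k. f (d k) (r n)) \<longlonglongrightarrow> L"
      by (rule LIMSEQ_offset)
    then show ?thesis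
      by (auto simp: convergent_def)
  qed
  show ?thesis
    using subseq rat_cnv rS by auto
qed

lemma helly_all:
  fixes f :: "nat \<Rightarrow> real \<Rightarrow> real"
  assumes mono: "\<And>n. mono (f n)"
  assumes bdd: "\<And>n x. \<bar>f n x\<bar> \<le> M"
  shows "\<exists>s. strict_mono s \<and> (\<forall>x. convergent (\<lambda>n. f (s n) x))"
proof -
  obtain d where subseq: "strict_mono d" and rat_cnv: "\<And>q. q \<in> \<rat> \<Longrightarrow> convergent (\<lambda>k. f (d k) q)"
    using countable_conv[OF countable_rat, of f M] bdd by blast
  let ?f = "\<lambda>q. \<lambda>k. f (d k) q"
  have lim_f: "q \<in> \<rat> \<Longrightarrow> ?f q \<longlonglongrightarrow> lim (?f q)" for q
    using rat_cnv convergent_LIMSEQ_iff by auto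
  have lim_bdd: "lim (?f q) \<in> {-M..M}" if "q \<in> \<rat>" for q
  proof -
    have "closed {-M..M}" using closed_real_atLeastAtMost by auto
    hence "(\<forall>i. ?f q i \<in> {-M..M}) \<and> ?f q \<longlonglongrightarrow> lim (?f q) \<longrightarrow> lim (?f q) \<in> {-M..M}"
      unfolding closed_sequential_limits by (drule_tac x = "?f q" in spec) blast
    moreover have "\<forall>i. ?f q i \<in> {-M..M}"
      using bdd by (simp add: abs_le_iff minus_le_iff)
    ultimately show "lim (?f q) \<in> {-M..M}"
      using lim_f that by auto
  qed
  then have limset_bdd: "\<And>x. {lim (?f q) |q. q \<in> \<rat> \<and> x < q} \<subseteq> {-M..M}"
    by auto
  then have bdd_below: "bdd_below {lim (?f q) |q. q \<in> \<rat> \<and> x < q}" for x :: real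
    by (metis (mono_tags) bdd_below_Icc bdd_below_mono)
  have r_unbdd: "\<exists>q. q \<in> \<rat> \<and> x < q" for x :: real
    using Rats_dense_in_real[OF less_add_one, of x] by auto
  then have nonempty: "{lim (?f q) |q. q \<in> \<rat> \<and> x < q} \<noteq> {}" for x :: real
    by auto
  define F where "F x = Inf {lim (?f q) |q. q \<in> \<rat> \<and> x < q}" for x
  have F_eq: "ereal (F x) = (INF q\<in>{q. q \<in> \<rat> \<and> x < q}. ereal (lim (?f q)))" for x
    unfolding F_def by (subst ereal_Inf'[OF bdd_below nonempty]) (simp add: setcompr_eq_image image_comp)
  have mono_F: "mono F"
    using nonempty by (auto intro!: cInf_superset_mono simp: F_def bdd_below mono_def)
  have cont_conv: "(\<lambda>n. f (d n) x) \<longlonglongrightarrow> F x" if cts: "continuous (at x) F" for x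
  proof (rule limsup_le_liminf_real)
    show "limsup (\<lambda>n. f (d n) x) \<le> F x"
    proof (rule tendsto_lowerbound)
      show "(F \<longlongrightarrow> ereal (F x)) (at_right x)"
        using cts unfolding continuous_at_split by (auto simp: continuous_within)
      show "\<forall>\<^sub>F i in at_right x. limsup (\<lambda>n. f (d n) x) \<le> F i"
        unfolding eventually_at_right[OF less_add_one]
      proof (rule, rule, rule less_add_one, safe)
        fix y assume y: "x < y"
        with Rats_dense_in_real obtain N where N: "N \<in> \<rat>" "x < N" "N < y" by blast
        have *: "y < q \<Longrightarrow> q \<in> \<rat> \<Longrightarrow> lim (?f N) \<le> lim (?f q)" for q
          using \<open>N < y\<close> N by (intro LIMSEQ_le[OF lim_f lim_f]) (auto intro!: mono[THEN monoD])
        have "limsup (\<lambda>n. f (d n) x) \<le> limsup (?f N)"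
          using \<open>x < N\<close> by (auto intro!: Limsup_mono always_eventually mono[THEN monoD])
        also have "\<dots> = lim (\<lambda>n. ereal (?f N n))"
          using rat_cnv[of N] N by (force intro!: convergent_limsup_cl simp: convergent_def)
        also have "\<dots> \<le> F y"
          using N by (auto intro!: INF_greatest * simp: convergent_real_imp_convergent_ereal rat_cnv F_eq)
        finally show "limsup (\<lambda>n. f (d n) x) \<le> F y" .
      qed
    qed simp
    show "F x \<le> liminf (\<lambda>n. f (d n) x)"
    proof (rule tendsto_upperbound)
      show "(F \<longlongrightarrow> ereal (F x)) (at_left x)"
        using cts unfolding continuous_at_split by (auto simp: continuous_within)
      show "\<forall>\<^sub>F i in at_left x. F i \<le> liminf (\<lambda>n. f (d n) x)"
        unfolding eventually_at_left[OF minus_one_less]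
      proof (rule, rule, rule minus_one_less, safe)
        fix y assume y: "y < x"
        with Rats_dense_in_real obtain N where N: "N \<in> \<rat>" "y < N" "N < x" by blast
        have "F y \<le> liminf (?f N)"
          using \<open>y < N\<close> N by (auto simp: F_eq convergent_real_imp_convergent_ereal
            rat_cnv convergent_liminf_cl intro!: INF_lower2)
        also have "\<dots> \<le> liminf (\<lambda>n. f (d n) x)"
          using \<open>N < x\<close> by (auto intro!: Liminf_mono monoD[OF mono] always_eventually)
        finally show "F y \<le> liminf (\<lambda>n. f (d n) x)" .
      qed
    qed simp
  qed
  have C: "countable {a. \<not> isCont F a}" by (rule mono_ctble_discont[OF mono_F])
  obtain e where e: "strict_mono e" and econv: "\<forall>x\<in>{a. \<not> isCont F a}. convergent (\<lambda>n. f (d (e n)) x)"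
    using countable_conv[OF C, of "\<lambda>n. f (d n)" M] bdd by blast
  have "convergent (\<lambda>n. f ((d \<circ> e) n) x)" for x
  proof (cases "isCont F x")
    case True
    then have "(\<lambda>n. f (d n) x) \<longlonglongrightarrow> F x" using cont_conv by simp
    then have "((\<lambda>n. f (d n) x) \<circ> e) \<longlonglongrightarrow> F x" using LIMSEQ_subseq_LIMSEQ e by blast
    then show ?thesis by (auto simp: convergent_def comp_def)
  next
    case False
    then show ?thesis using econv by auto
  qed
  moreover have "strict_mono (d \<circ> e)" using subseq e by (simp add: strict_mono_o)
  ultimately show ?thesis by blast
qed



lemma lnE_iff:
  fixes a b c t :: real
  assumes a: "0 \<le> a" and b: "0 \<le> b" and c: "0 \<le> c" and t: "0 < t" "t < 1"
  shows "(ereal t * lnE a + ereal (1-t) * lnE b \<le> lnE c) \<longleftrightarrow> (a powr t * b powr (1-t) \<le> c)"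
proof (cases "a = 0 \<or> b = 0")
  case True
  have nI: "lnE u \<noteq> \<infinity>" for u by (simp add: lnE_def)
  have "ereal t * lnE a + ereal (1-t) * lnE b = -\<infinity>"
  proof (cases "a = 0")
    case True
    have "ereal (1-t) * lnE b \<noteq> \<infinity>" using nI[of b] t
      by (cases "lnE b") (auto simp: ereal_mult_eq_PInfty)
    then show ?thesis using True t by (simp add: lnE_def)
  next
    case False
    then have "b = 0" using \<open>a = 0 \<or> b = 0\<close> by simp
    have "ereal t * lnE a \<noteq> \<infinity>" using nI[of a] t
      by (cases "lnE a") (auto simp: ereal_mult_eq_PInfty)
    then show ?thesis using \<open>b = 0\<close> t by (simp add: lnE_def)
  qed
  then have L: "ereal t * lnE a + ereal (1-t) * lnE b \<le> lnE c" by (simp only: ereal_infty_less_eq(1)) simp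
  have R: "a powr t * b powr (1-t) \<le> c" using True c by auto
  show ?thesis using L R by blast
next
  case False
  then have ap: "a > 0" and bp: "b > 0" using a b by auto
  have eq: "ereal t * lnE a + ereal (1-t) * lnE b = ereal (t * ln a + (1-t) * ln b)"
    using ap bp by (simp add: lnE_def)
  have pw: "a powr t * b powr (1-t) = exp (t * ln a + (1-t) * ln b)"
    using ap bp by (simp add: powr_def exp_add mult.commute)
  show ?thesis
  proof (cases "c = 0")
    case True
    then show ?thesis using eq pw by (simp add: lnE_def)
  next
    case False
    then have cp: "c > 0" using c by simp
    have "(t * ln a + (1-t) * ln b \<le> ln c) \<longleftrightarrow> exp (t * ln a + (1-t) * ln b) \<le> c"
      using cp by (metis exp_le_cancel_iff exp_ln)
    then show ?thesis using eq pw cp by (simp add: lnE_def)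
  qed
qed

lemma log_concave_powr:
  "log_concave h \<longleftrightarrow> (\<forall>x. 0 \<le> h x) \<and>
     (\<forall>x y t. 0 < t \<and> t < 1 \<longrightarrow> h x powr t * h y powr (1-t) \<le> h (t * x + (1 - t) * y))"
  unfolding log_concave_def using lnE_iff by auto

lemma log_concaveD:
  assumes "log_concave h" "0 < t" "t < 1"
  shows "h x powr t * h y powr (1-t) \<le> h (t * x + (1 - t) * y)"
  using assms log_concave_powr by blast

lemma log_concave_nonneg: "log_concave h \<Longrightarrow> 0 \<le> h x"
  unfolding log_concave_def by blast

lemma powr_min_le:
  fixes a b t :: real
  assumes "0 \<le> a" "0 \<le> b" "0 < t" "t < 1"
  shows "min a b \<le> a powr t * b powr (1-t)"
proof -
  let ?m = "min a b"
  have "?m powr t \<le> a powr t" using assms by (intro powr_mono2) auto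
  moreover have "?m powr (1-t) \<le> b powr (1-t)" using assms by (intro powr_mono2) auto
  ultimately have "?m powr t * ?m powr (1-t) \<le> a powr t * b powr (1-t)"
    by (intro mult_mono) auto
  moreover have "?m powr t * ?m powr (1-t) = ?m"
  proof (cases "?m = 0")
    case True then show ?thesis by simp
  next
    case False then show ?thesis using assms by (simp add: powr_add[symmetric])
  qed
  ultimately show ?thesis by simp
qed

lemma log_concave_quasi:
  assumes h: "log_concave h" and "x \<le> z" "z \<le> y"
  shows "min (h x) (h y) \<le> h z"
proof (cases "z = x \<or> z = y")
  case True then show ?thesis by auto
next
  case False
  then have xz: "x < z" and zy: "z < y" using assms by auto
  define t where "t = (y - z) / (y - x)"
  have t: "0 < t" "t < 1" using xz zy unfolding t_def by (auto simp: field_simps)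
  have tt: "t * (y - x) = y - z" using xz zy unfolding t_def by auto
  have z: "t * x + (1 - t) * y = z"
  proof -
    have "t * x + (1 - t) * y = y - t * (y - x)" by algebra
    then show ?thesis using tt by simp
  qed
  have "min (h x) (h y) \<le> h x powr t * h y powr (1-t)"
    using t log_concave_nonneg[OF h] by (intro powr_min_le) auto
  also have "\<dots> \<le> h z" using log_concaveD[OF h t] z by metis
  finally show ?thesis .
qed

lemma log_concave_scale:
  assumes h: "log_concave h" and c: "0 \<le> c"
  shows "log_concave (\<lambda>x. c * h x)"
  unfolding log_concave_powr
proof (intro conjI allI impI)
  show "0 \<le> c * h x" for x using c log_concave_nonneg[OF h] by simp
  fix x y t :: real assume t: "0 < t \<and> t < 1"
  have "(c * h x) powr t * (c * h y) powr (1-t) = (c powr t * c powr (1-t)) * (h x powr t * h y powr (1-t))"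
    using c log_concave_nonneg[OF h] by (simp add: powr_mult)
  also have "c powr t * c powr (1-t) = c"
    using c by (cases "c = 0") (simp_all add: powr_add[symmetric])
  finally show "(c * h x) powr t * (c * h y) powr (1-t) \<le> c * h (t * x + (1 - t) * y)"
    using log_concaveD[OF h, of t] t c by (simp add: mult_left_mono)
qed

lemma log_concave_ind:
  fixes a b c :: real
  assumes c: "0 \<le> c"
  shows "log_concave (\<lambda>x. c * indicator {a..b} x)"
  unfolding log_concave_powr
proof (intro conjI allI impI)
  show "0 \<le> c * indicator {a..b} x" for x using c by simp
  fix x y t :: real assume t: "0 < t \<and> t < 1"
  show "(c * indicator {a..b} x) powr t * (c * indicator {a..b} y) powr (1-t)
      \<le> c * indicator {a..b} (t * x + (1 - t) * y)"
  proof (cases "x \<in> {a..b} \<and> y \<in> {a..b}")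
    case True
    have "a \<le> t * x + (1 - t) * y"
    proof -
      have "t * a \<le> t * x" "(1-t) * a \<le> (1-t) * y" using True t by (auto intro: mult_left_mono)
      then show ?thesis by (simp add: algebra_simps)
    qed
    moreover have "t * x + (1 - t) * y \<le> b"
    proof -
      have "t * x \<le> t * b" "(1-t) * y \<le> (1-t) * b" using True t by (auto intro: mult_left_mono)
      then show ?thesis by (simp add: algebra_simps)
    qed
    ultimately show ?thesis using True c t
      by (cases "c = 0") (simp_all add: powr_add[symmetric] indicator_def)
  next
    case False
    then show ?thesis using c by (auto simp: indicator_def)
  qed
qed

lemma log_concave_zero: "log_concave (\<lambda>x. 0)"
  using log_concave_ind[of 0 0 0] by simp



lemma feas_int_le:
  assumes f: "prob_density f" and h: "feasible f h"
  shows "(\<integral>x. h x \<partial>lborel) \<le> 1"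
proof (cases "integrable lborel h")
  case True
  have "(\<integral>x. h x \<partial>lborel) \<le> (\<integral>x. f x \<partial>lborel)"
    using True f h by (intro integral_mono_AE) (auto simp: prob_density_def feasible_def)
  then show ?thesis using f by (simp add: prob_density_def)
next
  case False
  then show ?thesis by (simp add: not_integrable_integral_eq)
qed

lemma feas_int_nonneg:
  assumes h: "feasible f h"
  shows "0 \<le> (\<integral>x. h x \<partial>lborel)"
  using h log_concave_nonneg by (intro integral_nonneg_AE) (auto simp: feasible_def)

lemma feas_zero: "prob_density f \<Longrightarrow> feasible f (\<lambda>x. 0)"
  unfolding feasible_def prob_density_def using log_concave_zero by auto

lemma Q_bdd:
  assumes f: "prob_density f"
  shows "bdd_above {(\<integral>x. h x \<partial>lborel) | h. feasible f h}"
  using feas_int_le[OF f] by (auto intro!: bdd_aboveI[of _ 1])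

lemma Q_zero:
  assumes f: "prob_density f"
  shows "0 \<in> {(\<integral>x. h x \<partial>lborel) | h. feasible f h}"
  using feas_zero[OF f] by force

lemma feas_le_opt:
  assumes f: "prob_density f" and h: "feasible f h"
  shows "(\<integral>x. h x \<partial>lborel) \<le> opt_value f"
  unfolding opt_value_def using h by (intro cSup_upper[OF _ Q_bdd[OF f]]) auto

lemma opt_nonneg:
  assumes f: "prob_density f"
  shows "0 \<le> opt_value f"
  using feas_le_opt[OF f feas_zero[OF f]] by simp

lemma ind_density:
  fixes a b c :: real
  assumes "a \<le> b"
  shows "integrable lborel (\<lambda>x. c * indicator {a..b} x)"
    and "(\<integral>x. c * indicator {a..b} x \<partial>lborel) = c * (b - a)"
  using assms by (auto intro!: integrable_mult_right integrable_real_indicator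
      simp: emeasure_lborel_Icc)

lemma ind01_density: "(\<lambda>x. indicator {0..1::real} x :: real) \<in> logconcave_densities"
proof -
  have "log_concave (\<lambda>x. 1 * indicator {0..1::real} x)" by (rule log_concave_ind) simp
  moreover have "prob_density (\<lambda>x. 1 * indicator {0..1::real} x)"
    unfolding prob_density_def using ind_density[of 0 1 1] by auto
  ultimately show ?thesis unfolding logconcave_densities_def by simp
qed

lemma P_bdd:
  assumes f: "prob_density f"
  shows "bdd_above {p. \<exists>g\<in>logconcave_densities. AE x in lborel. f x - p * g x \<ge> 0}"
proof (rule bdd_aboveI[of _ 1], clarify)
  fix p g assume g: "g \<in> logconcave_densities" and ae: "AE x in lborel. f x - p * g x \<ge> 0"
  have gi: "integrable lborel g" "(\<integral>x. g x \<partial>lborel) = 1"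
    using g by (auto simp: logconcave_densities_def prob_density_def)
  have "(\<integral>x. p * g x \<partial>lborel) \<le> (\<integral>x. f x \<partial>lborel)"
    using gi f ae by (intro integral_mono_AE) (auto simp: prob_density_def)
  then show "p \<le> 1" using gi f by (simp add: prob_density_def)
qed

lemma P_zero:
  assumes f: "prob_density f"
  shows "0 \<in> {p. \<exists>g\<in>logconcave_densities. AE x in lborel. f x - p * g x \<ge> 0}"
  using ind01_density f by (auto simp: prob_density_def)

lemma pi0_eq:
  assumes f: "prob_density f"
  shows "pi0 f = opt_value f"
proof (rule antisym)
  show "pi0 f \<le> opt_value f"
    unfolding pi0_def
  proof (rule cSup_least)
    show "{p. \<exists>g\<in>logconcave_densities. AE x in lborel. f x - p * g x \<ge> 0} \<noteq> {}"
      using P_zero[OF f] by blast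
    fix p assume "p \<in> {p. \<exists>g\<in>logconcave_densities. AE x in lborel. f x - p * g x \<ge> 0}"
    then obtain g where g: "g \<in> logconcave_densities" and ae: "AE x in lborel. f x - p * g x \<ge> 0"
      by blast
    show "p \<le> opt_value f"
    proof (cases "p \<le> 0")
      case True then show ?thesis using opt_nonneg[OF f] by simp
    next
      case False
      have gi: "integrable lborel g" "(\<integral>x. g x \<partial>lborel) = 1" "log_concave g"
        using g by (auto simp: logconcave_densities_def prob_density_def)
      have "feasible f (\<lambda>x. p * g x)"
        unfolding feasible_def using False gi ae by (auto intro: log_concave_scale)
      from feas_le_opt[OF f this] show ?thesis using gi by simp
    qed
  qed
  show "opt_value f \<le> pi0 f"
    unfolding opt_value_def
  proof (rule cSup_least)
    show "{(\<integral>x. h x \<partial>lborel) | h. feasible f h} \<noteq> {}" using Q_zero[OF f] by blast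
    fix q assume "q \<in> {(\<integral>x. h x \<partial>lborel) | h. feasible f h}"
    then obtain h where h: "feasible f h" and q: "q = (\<integral>x. h x \<partial>lborel)" by blast
    have Pb: "bdd_above {p. \<exists>g\<in>logconcave_densities. AE x in lborel. f x - p * g x \<ge> 0}"
      by (rule P_bdd[OF f])
    show "q \<le> pi0 f"
    proof (cases "q \<le> 0")
      case True
      then show ?thesis unfolding pi0_def using cSup_upper[OF P_zero[OF f] Pb] by simp
    next
      case False
      then have hi: "integrable lborel h" using q not_integrable_integral_eq by fastforce
      define g where "g = (\<lambda>x. (1/q) * h x)"
      have "log_concave g" unfolding g_def using h False
        by (intro log_concave_scale) (auto simp: feasible_def)
      moreover have "prob_density g"
        unfolding prob_density_def g_def using hi False q h log_concave_nonneg
        by (auto simp: feasible_def)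
      moreover have "AE x in lborel. f x - q * g x \<ge> 0"
        using h False unfolding g_def feasible_def by auto
      ultimately have "q \<in> {p. \<exists>g\<in>logconcave_densities. AE x in lborel. f x - p * g x \<ge> 0}"
        unfolding logconcave_densities_def by blast
      then show ?thesis unfolding pi0_def using cSup_upper[OF _ Pb] by blast
    qed
  qed
qed



lemma null_interval:
  fixes a b :: real
  assumes "a < b"
  shows "\<not> (AE x in lborel. x \<notin> {a<..<b})"
proof
  assume "AE x in lborel. x \<notin> {a<..<b}"
  then have "emeasure lborel {a<..<b} = 0"
    by (subst (asm) AE_iff_measurable[of "{a<..<b}"]) auto
  then show False using assms by simp
qed

definition f0 :: "real \<Rightarrow> real" where
  "f0 x = (1/2) * indicator {0..1} x + (1/2) * indicator {2..3} x"

lemma f0_density: "prob_density f0"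
proof -
  have i1: "integrable lborel (\<lambda>x. (1/2::real) * indicator {0..1::real} x)"
    and e1: "(\<integral>x. (1/2::real) * indicator {0..1::real} x \<partial>lborel) = 1/2"
    using ind_density[of 0 1 "1/2"] by auto
  have i2: "integrable lborel (\<lambda>x. (1/2::real) * indicator {2..3::real} x)"
    and e2: "(\<integral>x. (1/2::real) * indicator {2..3::real} x \<partial>lborel) = 1/2"
    using ind_density[of 2 3 "1/2"] by auto
  have "integrable lborel f0" unfolding f0_def using i1 i2 by simp
  moreover have "(\<integral>x. f0 x \<partial>lborel) = 1"
    unfolding f0_def using i1 i2 e1 e2 by (simp add: Bochner_Integration.integral_add)
  moreover have "0 \<le> f0 x" for x unfolding f0_def by simp
  ultimately show ?thesis unfolding prob_density_def by auto
qed

lemma f0_bound: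
  assumes h: "feasible f0 h"
  shows "(\<integral>x. h x \<partial>lborel) \<le> 1/2"
proof -
  have lc: "log_concave h" and ae: "AE x in lborel. h x \<le> f0 x"
    using h by (auto simp: feasible_def)
  have nn: "0 \<le> h x" for x using log_concave_nonneg[OF lc] .
  have ae0: "AE x in lborel. x \<noteq> 0" "AE x in lborel. x \<noteq> 1" "AE x in lborel. x \<noteq> 2" "AE x in lborel. x \<noteq> 3"
    by (rule AE_lborel_singleton)+
  have key: "\<exists>g. integrable lborel g \<and> (\<integral>x. g x \<partial>lborel) = 1/2 \<and> (AE x in lborel. h x \<le> g x)"
  proof (cases "\<forall>x\<in>{0<..<1}. h x \<le> 0")
    case True
    let ?g = "\<lambda>x. (1/2::real) * indicator {2..3::real} x"
    have "AE x in lborel. h x \<le> ?g x"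
      using ae ae0
    proof eventually_elim
      case (elim x)
      show ?case
      proof (cases "x \<in> {0<..<1}")
        case True then show ?thesis using \<open>\<forall>x\<in>{0<..<1}. h x \<le> 0\<close> by auto
      next
        case False
        then have "x \<notin> {0..1}" using elim by auto
        then show ?thesis using elim by (auto simp: f0_def indicator_def)
      qed
    qed
    then show ?thesis using ind_density[of 2 3 "1/2"] by (intro exI[of _ ?g]) auto
  next
    case False
    then obtain x where x: "x \<in> {0<..<1}" "h x > 0" by force
    show ?thesis
    proof (cases "\<forall>y\<in>{2<..<3}. h y \<le> 0")
      case True
      let ?g = "\<lambda>x. (1/2::real) * indicator {0..1::real} x"
      have "AE x in lborel. h x \<le> ?g x"
        using ae ae0
      proof eventually_elim
        case (elim x)
        show ?case
        proof (cases "x \<in> {2<..<3}")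
          case True then show ?thesis using \<open>\<forall>y\<in>{2<..<3}. h y \<le> 0\<close> by auto
        next
          case False
          then have "x \<notin> {2..3}" using elim by auto
          then show ?thesis using elim by (auto simp: f0_def indicator_def)
        qed
      qed
      then show ?thesis using ind_density[of 0 1 "1/2"] by (intro exI[of _ ?g]) auto
    next
      case False
      then obtain y where y: "y \<in> {2<..<3}" "h y > 0" by force
      have "AE z in lborel. z \<notin> {1<..<2::real}"
        using ae
      proof eventually_elim
        case (elim z)
        show ?case
        proof
          assume z: "z \<in> {1<..<2}"
          have "min (h x) (h y) \<le> h z" using x y z by (intro log_concave_quasi[OF lc]) auto
          moreover have "f0 z = 0" using z by (auto simp: f0_def indicator_def)
          ultimately show False using elim x y by auto
        qed
      qed
      then show ?thesis using null_interval[of 1 2] by simp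
    qed
  qed
  then obtain g where g: "integrable lborel g" "(\<integral>x. g x \<partial>lborel) = 1/2" "AE x in lborel. h x \<le> g x"
    by blast
  show ?thesis
  proof (cases "integrable lborel h")
    case True
    then show ?thesis using g integral_mono_AE[OF True g(1) g(3)] by simp
  next
    case False
    then show ?thesis by (simp add: not_integrable_integral_eq)
  qed
qed

lemma example_part:
  "\<exists>f. prob_density f \<and>
            (\<exists>h1 h2. is_maximizer f h1 \<and> is_maximizer f h2 \<and>
                     \<not> (AE x in lborel. h1 x = h2 x))"
proof (intro exI conjI)
  let ?h1 = "\<lambda>x. (1/2::real) * indicator {0..1::real} x"
  let ?h2 = "\<lambda>x. (1/2::real) * indicator {2..3::real} x"
  show "prob_density f0" by (rule f0_density)
  have "log_concave ?h1" by (rule log_concave_ind) simp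
  moreover have "AE x in lborel. ?h1 x \<le> f0 x" by (auto simp: f0_def indicator_def)
  ultimately have "feasible f0 ?h1" unfolding feasible_def by blast
  then show "is_maximizer f0 ?h1" unfolding is_maximizer_def
    using f0_bound ind_density[of 0 1 "1/2"] by auto
  have "log_concave ?h2" by (rule log_concave_ind) simp
  moreover have "AE x in lborel. ?h2 x \<le> f0 x" by (auto simp: f0_def indicator_def)
  ultimately have "feasible f0 ?h2" unfolding feasible_def by blast
  then show "is_maximizer f0 ?h2" unfolding is_maximizer_def
    using f0_bound ind_density[of 2 3 "1/2"] by auto
  show "\<not> (AE x in lborel. ?h1 x = ?h2 x)"
  proof
    assume "AE x in lborel. ?h1 x = ?h2 x"
    then have "AE x in lborel. x \<notin> {0<..<1::real}"
      by eventually_elim (auto simp: indicator_def)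
    then show False using null_interval[of 0 1] by simp
  qed
qed



lemma qc_decomp:
  fixes g :: "real \<Rightarrow> real"
  assumes bd: "\<And>x. 0 \<le> g x \<and> g x \<le> 1"
    and qc: "\<And>x z y. x \<le> z \<Longrightarrow> z \<le> y \<Longrightarrow> min (g x) (g y) \<le> g z"
  shows "g x = min (Sup (g ` {..x})) (Sup (g ` {x..}))"
    and "mono (\<lambda>x. Sup (g ` {..x}))"
    and "mono (\<lambda>x. - Sup (g ` {x..}))"
    and "\<bar>Sup (g ` {..x})\<bar> \<le> 1"
    and "\<bar>- Sup (g ` {x..})\<bar> \<le> 1"
proof -
  have b1: "bdd_above (g ` S)" for S using bd by (auto intro!: bdd_aboveI[of _ 1])
  have up1: "g x \<le> Sup (g ` {..x})" using b1 by (intro cSup_upper) auto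
  have up2: "g x \<le> Sup (g ` {x..})" using b1 by (intro cSup_upper) auto
  have le1: "Sup (g ` S) \<le> 1" if "S \<noteq> {}" for S using that bd by (intro cSup_least) auto
  show "g x = min (Sup (g ` {..x})) (Sup (g ` {x..}))"
  proof (rule ccontr)
    assume "g x \<noteq> min (Sup (g ` {..x})) (Sup (g ` {x..}))"
    then have "g x < Sup (g ` {..x})" "g x < Sup (g ` {x..})" using up1 up2 by auto
    then obtain y z where "y \<le> x" "g x < g y" "x \<le> z" "g x < g z"
      using b1 by (auto simp: less_cSup_iff)
    with qc[of y x z] show False by auto
  qed
  show "mono (\<lambda>x. Sup (g ` {..x}))"
    by (rule monoI, rule cSup_subset_mono) (auto intro: b1)
  show "mono (\<lambda>x. - Sup (g ` {x..}))"
    by (rule monoI, simp, rule cSup_subset_mono) (auto intro: b1)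
  show "\<bar>Sup (g ` {..x})\<bar> \<le> 1" using le1[of "{..x}"] up1 bd[of x] by auto
  show "\<bar>- Sup (g ` {x..})\<bar> \<le> 1" using le1[of "{x..}"] up2 bd[of x] by auto
qed

lemma frac_mono:
  fixes u v :: real
  assumes "0 \<le> u" "u \<le> v"
  shows "u / (1 + u) \<le> v / (1 + v)"
  using assms by (simp add: divide_simps) (simp add: algebra_simps)

lemma powr_inv_bound:
  fixes u e K :: real
  assumes "0 \<le> u" "0 < e" "u powr e \<le> K"
  shows "u \<le> K powr (1/e)"
proof -
  have "u = (u powr e) powr (1/e)" using assms by (simp add: powr_powr)
  also have "\<dots> \<le> K powr (1/e)" using assms by (intro powr_mono2) auto
  finally show ?thesis .
qed



lemma exists_max:
  assumes f: "prob_density f"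
  shows "\<exists>h. is_maximizer f h \<and> (\<integral>x. h x \<partial>lborel) = opt_value f"
proof (cases "opt_value f = 0")
  case True
  show ?thesis
    using True feas_zero[OF f] feas_le_opt[OF f] by (intro exI[of _ "\<lambda>x. 0"]) (auto simp: is_maximizer_def)
next
  case False
  define Ov where "Ov = opt_value f"
  have Opos: "0 < Ov" using False opt_nonneg[OF f] unfolding Ov_def by simp
  have fi: "integrable lborel f" and fm: "f \<in> borel_measurable lborel" and fnn: "\<And>x. 0 \<le> f x"
    using f by (auto simp: prob_density_def)
  have "\<forall>n. \<exists>h. feasible f h \<and> max (Ov/2) (Ov - 1/Suc n) < (\<integral>x. h x \<partial>lborel)"
  proof
    fix n
    have "max (Ov/2) (Ov - 1/Suc n) < Ov" using Opos by auto
    then have "max (Ov/2) (Ov - 1/Suc n) < Sup {(\<integral>x. h x \<partial>lborel) | h. feasible f h}"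
      unfolding Ov_def opt_value_def .
    then show "\<exists>h. feasible f h \<and> max (Ov/2) (Ov - 1/Suc n) < (\<integral>x. h x \<partial>lborel)"
      using Q_zero[OF f] Q_bdd[OF f] by (subst (asm) less_cSup_iff) auto
  qed
  then obtain hs where hs_feas: "\<And>n. feasible f (hs n)"
    and hs_big: "\<And>n. max (Ov/2) (Ov - 1/Suc n) < (\<integral>x. hs n x \<partial>lborel)"
    by metis
  have hs_le: "(\<integral>x. hs n x \<partial>lborel) \<le> Ov" for n
    unfolding Ov_def by (rule feas_le_opt[OF f hs_feas])
  have hs_int: "integrable lborel (hs n)" for n
    using hs_big[of n] Opos not_integrable_integral_eq[of lborel "hs n"] by fastforce
  have hs_meas: "hs n \<in> borel_measurable lborel" for n using hs_int by auto
  have hs_lc: "log_concave (hs n)" for n using hs_feas by (auto simp: feasible_def)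
  have hs_nn: "0 \<le> hs n x" for n x using log_concave_nonneg[OF hs_lc] .
  have hs_lim: "(\<lambda>n. \<integral>x. hs n x \<partial>lborel) \<longlonglongrightarrow> Ov"
  proof (rule tendsto_sandwich[of "\<lambda>n. Ov - 1 / Suc n" _ _ "\<lambda>n. Ov"])
    show "\<forall>\<^sub>F n in sequentially. Ov - 1 / real (Suc n) \<le> (\<integral>x. hs n x \<partial>lborel)"
      using hs_big by (intro always_eventually allI) (metis max.strict_boundedE less_imp_le)
    show "\<forall>\<^sub>F n in sequentially. (\<integral>x. hs n x \<partial>lborel) \<le> Ov"
      using hs_le by simp
    show "(\<lambda>n. Ov - 1 / real (Suc n)) \<longlonglongrightarrow> Ov"
      using tendsto_diff[OF tendsto_const[of Ov] LIMSEQ_inverse_real_of_nat] by (simp add: inverse_eq_divide)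
  qed simp
  define a where "a n x = hs n x / (1 + hs n x)" for n x
  have a_bd: "0 \<le> a n x \<and> a n x \<le> 1" for n x
    unfolding a_def using hs_nn[of n x] by (auto simp: divide_simps)
  have a_lt: "a n x < 1" for n x
    unfolding a_def using hs_nn[of n x] by (auto simp: divide_simps)
  have a_inv: "hs n x = a n x / (1 - a n x)" for n x
    unfolding a_def using hs_nn[of n x] by (auto simp: divide_simps)
  have a_qc: "min (a n x) (a n y) \<le> a n z" if "x \<le> z" "z \<le> y" for n x y z
  proof -
    have m: "min (hs n x) (hs n y) \<le> hs n z" by (rule log_concave_quasi[OF hs_lc that])
    show ?thesis
    proof (cases "hs n x \<le> hs n y")
      case True
      then show ?thesis using m frac_mono[of "hs n x" "hs n z"] hs_nn unfolding a_def
        by (metis min.absorb1 min.coboundedI1)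
    next
      case False
      then show ?thesis using m frac_mono[of "hs n y" "hs n z"] hs_nn unfolding a_def
        by (metis min.absorb2 min.coboundedI2 nle_le)
    qed
  qed
  define I where "I n x = Sup (a n ` {..x})" for n x
  define D where "D n x = Sup (a n ` {x..})" for n x
  have aID: "a n x = min (I n x) (D n x)" for n x
    unfolding I_def D_def by (rule qc_decomp(1)[OF a_bd a_qc])
  have Imono: "mono (I n)" for n
    unfolding I_def by (rule qc_decomp(2)[OF a_bd a_qc])
  have Dmono: "mono (\<lambda>x. - D n x)" for n
    unfolding D_def by (rule qc_decomp(3)[OF a_bd a_qc])
  have Ibd: "\<bar>I n x\<bar> \<le> 1" for n x
    unfolding I_def by (rule qc_decomp(4)[OF a_bd a_qc])
  have Dbd: "\<bar>- D n x\<bar> \<le> 1" for n x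
    unfolding D_def by (rule qc_decomp(5)[OF a_bd a_qc])
  obtain s1 where s1: "strict_mono s1" and s1c: "\<And>x. convergent (\<lambda>n. I (s1 n) x)"
    using helly_all[of I 1] Imono Ibd by blast
  obtain s2 where s2: "strict_mono s2" and s2c: "\<And>x. convergent (\<lambda>n. - D (s1 (s2 n)) x)"
    using helly_all[of "\<lambda>n x. - D (s1 n) x" 1] Dmono Dbd by blast
  define s where "s = s1 \<circ> s2"
  have s: "strict_mono s" unfolding s_def using s1 s2 by (simp add: strict_mono_o)
  have aconv: "convergent (\<lambda>n. a (s n) x)" for x
  proof -
    obtain LI where LI: "(\<lambda>n. I (s1 n) x) \<longlonglongrightarrow> LI" using s1c[of x] by (auto simp: convergent_def)
    then have LI2: "(\<lambda>n. I (s n) x) \<longlonglongrightarrow> LI"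
      using LIMSEQ_subseq_LIMSEQ[OF LI s2] unfolding s_def by (simp add: comp_def)
    obtain LD where LD: "(\<lambda>n. - D (s n) x) \<longlonglongrightarrow> LD" using s2c[of x] by (auto simp: convergent_def s_def)
    then have LD2: "(\<lambda>n. D (s n) x) \<longlonglongrightarrow> - LD" using tendsto_minus by fastforce
    have "(\<lambda>n. min (I (s n) x) (D (s n) x)) \<longlonglongrightarrow> min LI (- LD)"
      by (intro tendsto_min LI2 LD2)
    then show ?thesis unfolding aID convergent_def by blast
  qed
  define k where "k n = hs (s n)" for n
  define A where "A x = lim (\<lambda>n. a (s n) x)" for x
  have aA: "(\<lambda>n. a (s n) x) \<longlonglongrightarrow> A x" for x
    unfolding A_def using aconv convergent_LIMSEQ_iff by blast
  have A_bd: "0 \<le> A x \<and> A x \<le> 1" for x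
    using aA[of x] a_bd by (auto intro: LIMSEQ_le_const LIMSEQ_le_const2)
  have k_lc: "log_concave (k n)" for n unfolding k_def by (rule hs_lc)
  have k_nn: "0 \<le> k n x" for n x unfolding k_def by (rule hs_nn)
  have k_meas: "k n \<in> borel_measurable lborel" for n unfolding k_def by (rule hs_meas)
  have k_lim: "(\<lambda>n. \<integral>x. k n x \<partial>lborel) \<longlonglongrightarrow> Ov"
    using LIMSEQ_subseq_LIMSEQ[OF hs_lim s] unfolding k_def by (simp add: comp_def)
  have ae_all: "AE x in lborel. \<forall>n. k n x \<le> f x"
    unfolding AE_all_countable k_def using hs_feas by (auto simp: feasible_def)
  have k_fin: "(\<lambda>n. k n x) \<longlonglongrightarrow> A x / (1 - A x)" if "A x < 1" for x
  proof -
    have "(\<lambda>n. a (s n) x / (1 - a (s n) x)) \<longlonglongrightarrow> A x / (1 - A x)"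
      using that by (intro tendsto_intros aA) auto
    then show ?thesis unfolding k_def using a_inv by simp
  qed
  have k_inf: "eventually (\<lambda>n. B < k n x) sequentially" if "A x = 1" "0 \<le> B" for x B
  proof -
    have "B / (1 + B) < A x" using that by (simp add: divide_simps)
    then have "eventually (\<lambda>n. B / (1 + B) < a (s n) x) sequentially"
      using aA[of x] order_tendstoD(1) by blast
    then show ?thesis
    proof eventually_elim
      case (elim n)
      show ?case
      proof (rule ccontr)
        assume "\<not> B < k n x"
        then have "a (s n) x \<le> B / (1 + B)"
          unfolding a_def k_def using frac_mono[of "hs (s n) x" B] hs_nn by simp
        then show False using elim by simp
      qed
    qed
  qed
  have ae_lt: "AE x in lborel. A x < 1"
    using ae_all
  proof eventually_elim
    case (elim x)
    show ?case
    proof (rule ccontr)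
      assume "\<not> A x < 1"
      then have "A x = 1" using A_bd[of x] by simp
      then have "eventually (\<lambda>n. f x < k n x) sequentially" using k_inf fnn by blast
      then obtain n where "f x < k n x" using eventually_sequentially by (metis order.refl)
      then show False using elim by (meson not_le)
    qed
  qed
  define H where "H x = A x / (1 - A x)" for x
  have a_meas: "(\<lambda>x. a n x) \<in> borel_measurable lborel" for n
    unfolding a_def using hs_meas[of n] by measurable
  have A_meas: "A \<in> borel_measurable lborel"
    by (rule borel_measurable_LIMSEQ_real[OF aA a_meas])
  have H_meas: "H \<in> borel_measurable lborel"
    unfolding H_def using A_meas by measurable
  have ae_conv: "AE x in lborel. (\<lambda>n. k n x) \<longlonglongrightarrow> H x"
    using ae_lt by eventually_elim (auto simp: H_def intro: k_fin)
  have bound: "AE x in lborel. norm (k i x) \<le> f x" for i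
    using ae_all by eventually_elim (auto simp: k_nn)
  have H_int: "integrable lborel H"
    by (rule integrable_dominated_convergence[OF H_meas k_meas fi ae_conv bound])
  have "(\<lambda>n. \<integral>x. k n x \<partial>lborel) \<longlonglongrightarrow> (\<integral>x. H x \<partial>lborel)"
    by (rule integral_dominated_convergence[OF H_meas k_meas fi ae_conv bound])
  then have H_integral: "(\<integral>x. H x \<partial>lborel) = Ov"
    using k_lim LIMSEQ_unique by blast
  have all_lt: "A x0 < 1" for x0
  proof (rule ccontr)
    assume "\<not> A x0 < 1"
    then have Ax0: "A x0 = 1" using A_bd[of x0] by simp
    have "\<exists>y. y \<noteq> x0 \<and> H y \<noteq> 0"
    proof (rule ccontr)
      assume nex: "\<not> (\<exists>y. y \<noteq> x0 \<and> H y \<noteq> 0)"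
      from AE_lborel_singleton[of x0] have "AE x in lborel. H x = 0"
        by eventually_elim (use nex in auto)
      then have "(\<integral>x. H x \<partial>lborel) = 0"
        by (rule integral_eq_zero_AE)
      then show False using H_integral Opos by simp
    qed
    then obtain y where y: "y \<noteq> x0" "H y \<noteq> 0" by blast
    have Ay: "A y < 1" using y A_bd[of y] by (cases "A y = 1") (auto simp: H_def)
    have Hy: "0 < H y" using y Ay A_bd[of y] unfolding H_def by (auto simp: divide_simps)
    have ky: "(\<lambda>n. k n y) \<longlonglongrightarrow> H y" using k_fin[OF Ay] by (simp add: H_def)
    have segT: "A w = 1" if w: "min y x0 < w" "w < max y x0" for w
    proof (rule ccontr)
      assume "A w \<noteq> 1"
      then have Aw: "A w < 1" using A_bd[of w] by simp
      have kw: "(\<lambda>n. k n w) \<longlonglongrightarrow> H w" using k_fin[OF Aw] by (simp add: H_def)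
      define t where "t = (x0 - w) / (x0 - y)"
      have t: "0 < t" "t < 1" using w y unfolding t_def
        by (cases "y < x0"; auto simp: divide_simps)+
      have tt: "t * (x0 - y) = x0 - w" using y unfolding t_def by auto
      have wt: "t * y + (1 - t) * x0 = w"
      proof -
        have "t * y + (1 - t) * x0 = x0 - t * (x0 - y)" by algebra
        then show ?thesis using tt by simp
      qed
      define c where "c = H y / 2"
      define R where "R = H w + 1"
      define B where "B = (R / c powr t) powr (1 / (1 - t))"
      have c: "0 < c" using Hy unfolding c_def by simp
      have e1: "eventually (\<lambda>n. c < k n y) sequentially"
        using ky Hy order_tendstoD(1) unfolding c_def by (metis half_gt_zero less_add_same_cancel1 field_sum_of_halves)
      have e2: "eventually (\<lambda>n. k n w < R) sequentially"
        using kw order_tendstoD(2) unfolding R_def by (metis less_add_one)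
      have e3: "eventually (\<lambda>n. max 0 B < k n x0) sequentially"
        using k_inf[OF Ax0, of "max 0 B"] by simp
      have "eventually (\<lambda>n. False) sequentially"
        using e1 e2 e3
      proof eventually_elim
        case (elim n)
        have "k n y powr t * k n x0 powr (1-t) \<le> k n w"
          using log_concaveD[OF k_lc[of n] t, of y x0] wt by simp
        moreover have "c powr t * k n x0 powr (1-t) \<le> k n y powr t * k n x0 powr (1-t)"
          using elim c t by (intro mult_right_mono powr_mono2) auto
        ultimately have "c powr t * k n x0 powr (1-t) \<le> R" using elim by linarith
        then have "k n x0 powr (1-t) \<le> R / c powr t"
          using c by (simp add: field_simps)
        then have "k n x0 \<le> B" unfolding B_def
          using t k_nn by (intro powr_inv_bound) auto
        then show False using elim by simp
      qed
      then show False by simp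
    qed
    have "AE x in lborel. x \<notin> {min y x0<..<max y x0}"
      using ae_lt by eventually_elim (auto dest: segT)
    then show False using null_interval[of "min y x0" "max y x0"] y by (simp add: min_def max_def split: if_splits)
  qed
  have k_conv: "(\<lambda>n. k n x) \<longlonglongrightarrow> H x" for x
    using k_fin[OF all_lt] by (simp add: H_def)
  have H_nn: "0 \<le> H x" for x
    using k_conv[of x] k_nn by (auto intro: LIMSEQ_le_const)
  have H_lc: "log_concave H"
    unfolding log_concave_powr
  proof (intro conjI allI impI)
    show "0 \<le> H x" for x by (rule H_nn)
    fix x y t :: real assume t: "0 < t \<and> t < 1"
    have L1: "(\<lambda>n. k n x powr t * k n y powr (1-t)) \<longlonglongrightarrow> H x powr t * H y powr (1-t)"
      using t k_nn by (intro tendsto_mult tendsto_powr' k_conv tendsto_const) auto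
    have L2: "\<And>n. k n x powr t * k n y powr (1-t) \<le> k n (t * x + (1 - t) * y)"
      using log_concaveD[OF k_lc] t by blast
    show "H x powr t * H y powr (1-t) \<le> H (t * x + (1 - t) * y)"
      using L2 by (intro LIMSEQ_le[OF L1 k_conv]) auto
  qed
  have H_le: "AE x in lborel. H x \<le> f x"
    using ae_all by eventually_elim (auto intro: LIMSEQ_le_const2[OF k_conv])
  have H_feas: "feasible f H" unfolding feasible_def using H_lc H_le by blast
  show ?thesis
    using H_feas H_integral feas_le_opt[OF f] unfolding is_maximizer_def Ov_def
    by (intro exI[of _ H]) auto
qed


theorem mainTheorem7:
  shows "(\<forall>f. prob_density f \<longrightarrow>
            pi0 f = opt_value f \<and>
            (\<exists>h. is_maximizer f h \<and> (\<integral>x. h x \<partial>lborel) = opt_value f))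
       \<and> (\<exists>f. prob_density f \<and>
            (\<exists>h1 h2. is_maximizer f h1 \<and> is_maximizer f h2 \<and>
                     \<not> (AE x in lborel. h1 x = h2 x)))"
  using pi0_eq exists_max example_part by blast

end
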